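(* Let $p$ be a prime and $b,c\in\mathbb{Q}_p$ with $|c|_p=1$ and $|b|_p<1$, and let $f(x)=\frac{x}{bx+c}$. Let $S_1(0)=\{x\in\mathbb{Q}_p:|x|_p=1\}$. For every $a\in\mathbb{Q}_p$ and every positive integer $l$ such that the ball $U_{p^{-l}}(a)=\{x\in\mathbb{Q}_p:|x-a|_p\le p^{-l}\}$ is contained in $S_1(0)$, we have $$f(U_{p^{-l}}(a))=U_{p^{-l}}(f(a)).$$
   Context: $\mathbb{Q}_p$ is the field of $p$-adic numbers with norm $|\cdot|_p$. *)

theory Defs
  imports Complex_Main "HOL-Computational_Algebra.Primes"
begin

text \<open>Since p varies, Q_p is a carrier set (depending on p) rather than a type.\<close>

definition rat_pval :: "nat \<Rightarrow> rat \<Rightarrow> int" where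
  "rat_pval p q = (case quotient_of q of (a, d) \<Rightarrow>
       int (multiplicity (int p) a) - int (multiplicity (int p) d))"

definition rat_pnorm :: "nat \<Rightarrow> rat \<Rightarrow> real" where
  "rat_pnorm p q = (if q = 0 then 0 else real p powr (- real_of_int (rat_pval p q)))"

definition p_cauchy :: "nat \<Rightarrow> (nat \<Rightarrow> rat) \<Rightarrow> bool" where
  "p_cauchy p X \<longleftrightarrow> (\<forall>e>0. \<exists>N. \<forall>m\<ge>N. \<forall>n\<ge>N. rat_pnorm p (X m - X n) < e)"

definition p_equiv :: "nat \<Rightarrow> (nat \<Rightarrow> rat) \<Rightarrow> (nat \<Rightarrow> rat) \<Rightarrow> bool" where
  "p_equiv p X Y \<longleftrightarrow> p_cauchy p X \<and> p_cauchy p Y \<and>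
     (\<lambda>n. rat_pnorm p (X n - Y n)) \<longlonglongrightarrow> 0"

type_synonym qp = "(nat \<Rightarrow> rat) set"

definition qp_of_seq :: "nat \<Rightarrow> (nat \<Rightarrow> rat) \<Rightarrow> qp" where
  "qp_of_seq p X = {Y. p_equiv p X Y}"

definition Qp :: "nat \<Rightarrow> qp set" where
  "Qp p = {qp_of_seq p X | X. p_cauchy p X}"

definition qp_rep :: "qp \<Rightarrow> (nat \<Rightarrow> rat)" where
  "qp_rep x = (SOME X. X \<in> x)"

definition qp_zero :: "nat \<Rightarrow> qp" where
  "qp_zero p = qp_of_seq p (\<lambda>n. 0)"

definition qp_add :: "nat \<Rightarrow> qp \<Rightarrow> qp \<Rightarrow> qp" where
  "qp_add p x y = qp_of_seq p (\<lambda>n. qp_rep x n + qp_rep y n)"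

definition qp_neg :: "nat \<Rightarrow> qp \<Rightarrow> qp" where
  "qp_neg p x = qp_of_seq p (\<lambda>n. - qp_rep x n)"

definition qp_sub :: "nat \<Rightarrow> qp \<Rightarrow> qp \<Rightarrow> qp" where
  "qp_sub p x y = qp_add p x (qp_neg p y)"

definition qp_mult :: "nat \<Rightarrow> qp \<Rightarrow> qp \<Rightarrow> qp" where
  "qp_mult p x y = qp_of_seq p (\<lambda>n. qp_rep x n * qp_rep y n)"

definition qp_inverse :: "nat \<Rightarrow> qp \<Rightarrow> qp" where
  "qp_inverse p x = (if x = qp_zero p then qp_zero p
                     else qp_of_seq p (\<lambda>n. inverse (qp_rep x n)))"

definition qp_div :: "nat \<Rightarrow> qp \<Rightarrow> qp \<Rightarrow> qp" where
  "qp_div p x y = qp_mult p x (qp_inverse p y)"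

definition qp_norm :: "nat \<Rightarrow> qp \<Rightarrow> real" where
  "qp_norm p x = lim (\<lambda>n. rat_pnorm p (qp_rep x n))"

definition qp_ball :: "nat \<Rightarrow> qp \<Rightarrow> real \<Rightarrow> qp set" where
  "qp_ball p a r = {x \<in> Qp p. qp_norm p (qp_sub p x a) \<le> r}"

definition qp_unit_sphere :: "nat \<Rightarrow> qp set" where
  "qp_unit_sphere p = {x \<in> Qp p. qp_norm p x = 1}"

end

theory Submission
  imports Defs
begin


context fixes p :: nat assumes pp: "prime p" begin

lemma pe: "prime_elem (int p)" using pp by (simp add: prime_nat_int_transfer)
lemma nu: "\<not> is_unit (int p)" using prime_elem_not_unit[OF pe] .

abbreviation mu :: "int \<Rightarrow> int" where "mu x \<equiv> int (multiplicity (int p) x)"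

lemma val_frac:
  assumes "a \<noteq> 0" "d \<noteq> 0"
  shows "rat_pval p (of_int a / of_int d) = mu a - mu d"
proof -
  obtain a' d' where q: "quotient_of (of_int a / of_int d) = (a', d')" by (cases "quotient_of (of_int a / of_int d)") auto
  have d': "d' > 0" using quotient_of_denom_pos[OF q] .
  have e: "of_int a / of_int d = (of_int a' / of_int d' :: rat)" using quotient_of_div[OF q] .
  hence "a * d' = a' * d" using assms d' by (simp add: field_simps flip: of_int_mult)
  hence a': "a' \<noteq> 0" using assms d' by auto
  have "mu (a * d') = mu (a' * d)" using \<open>a * d' = a' * d\<close> by simp
  hence "mu a + mu d' = mu a' + mu d"
    using prime_elem_multiplicity_mult_distrib[OF pe] assms d' a' by simp
  thus ?thesis unfolding rat_pval_def q by simp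
qed

lemma rat_frac_ex: fixes q :: rat obtains a d where "q = of_int a / of_int d" "d \<noteq> (0::int)"
proof -
  obtain a d where q: "quotient_of q = (a, d)" by (cases "quotient_of q") auto
  show ?thesis using that[OF quotient_of_div[OF q]] quotient_of_denom_pos[OF q] by simp
qed

lemma val_mult: assumes "x \<noteq> 0" "y \<noteq> 0" shows "rat_pval p (x*y) = rat_pval p x + rat_pval p y"
proof -
  obtain a d where x: "x = of_int a / of_int d" "d \<noteq> 0" by (rule rat_frac_ex)
  obtain a' d' where y: "y = of_int a' / of_int d'" "d' \<noteq> 0" by (rule rat_frac_ex)
  have a: "a \<noteq> 0" "a' \<noteq> 0" using x y assms by auto
  have xy: "x * y = of_int (a*a') / of_int (d*d')" using x y by simp
  have "rat_pval p (x*y) = mu (a*a') - mu (d*d')" unfolding xy by (rule val_frac) (use a x y in auto)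
  also have "\<dots> = (mu a - mu d) + (mu a' - mu d')"
    using prime_elem_multiplicity_mult_distrib[OF pe] a x y by simp
  finally show ?thesis using x y a by (simp add: val_frac)
qed

lemma mu_add: assumes "u + v \<noteq> 0" "u \<noteq> 0" "v \<noteq> 0" shows "mu (u+v) \<ge> min (mu u) (mu v)"
proof -
  let ?k = "min (multiplicity (int p) u) (multiplicity (int p) v)"
  have "int p ^ ?k dvd u" by (meson dvd_trans le_imp_power_dvd min.cobounded1 multiplicity_dvd)
  moreover have "int p ^ ?k dvd v" by (meson dvd_trans le_imp_power_dvd min.cobounded2 multiplicity_dvd)
  ultimately have "int p ^ ?k dvd u + v" by simp
  hence "?k \<le> multiplicity (int p) (u+v)" using multiplicity_geI[OF assms(1) nu] by blast
  thus ?thesis by linarith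
qed

lemma val_add: assumes "x \<noteq> 0" "y \<noteq> 0" "x + y \<noteq> 0" shows "rat_pval p (x+y) \<ge> min (rat_pval p x) (rat_pval p y)"
proof -
  obtain a d where x: "x = of_int a / of_int d" "d \<noteq> 0" by (rule rat_frac_ex)
  obtain a' d' where y: "y = of_int a' / of_int d'" "d' \<noteq> 0" by (rule rat_frac_ex)
  have a: "a \<noteq> 0" "a' \<noteq> 0" using x y assms by auto
  have s: "x + y = of_int (a*d' + a'*d) / of_int (d*d')" using x y by (simp add: field_simps)
  have s0: "a*d' + a'*d \<noteq> 0"
  proof
    assume "a*d' + a'*d = 0" hence "x + y = 0" using s by (simp del: of_int_add of_int_mult)
    thus False using assms by simp
  qed
  have "rat_pval p (x+y) = mu (a*d' + a'*d) - mu (d*d')" unfolding s by (rule val_frac) (use s0 x y in auto)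
  also have "mu (d*d') = mu d + mu d'" using prime_elem_multiplicity_mult_distrib[OF pe] x y by simp
  also have "mu (a*d') = mu a + mu d'" using prime_elem_multiplicity_mult_distrib[OF pe] a x y by simp
  moreover have "mu (a'*d) = mu a' + mu d" using prime_elem_multiplicity_mult_distrib[OF pe] a x y by simp
  moreover have "mu (a*d' + a'*d) \<ge> min (mu (a*d')) (mu (a'*d))" using mu_add s0 a x y by simp
  ultimately have "rat_pval p (x+y) \<ge> min (mu a - mu d) (mu a' - mu d')" by linarith
  thus ?thesis using x y a by (simp add: val_frac)
qed

abbreviation N where "N \<equiv> rat_pnorm p"

lemma p1: "real p > 1" using pp prime_gt_1_nat by simp

lemma N_nonneg: "N x \<ge> 0" by (simp add: rat_pnorm_def)
lemma N_zero[simp]: "N 0 = 0" by (simp add: rat_pnorm_def)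
lemma N_eq0[simp]: "N x = 0 \<longleftrightarrow> x = 0" using p1 by (simp add: rat_pnorm_def)
lemma N_pos: "x \<noteq> 0 \<Longrightarrow> N x > 0" using p1 by (simp add: rat_pnorm_def)

lemma N_mult: "N (x*y) = N x * N y"
  using p1 by (simp add: rat_pnorm_def val_mult powr_add[symmetric])

lemma N_one[simp]: "N 1 = 1"
proof -
  have "N 1 = N 1 * N 1" using N_mult[of 1 1] by simp
  moreover have "N 1 > 0" by (rule N_pos) simp
  ultimately show ?thesis by simp
qed

lemma N_minus[simp]: "N (-x) = N x"
proof -
  have "N (-1) * N (-1) = 1" using N_mult[of "-1" "-1"] by simp
  moreover have "N (-1) \<ge> 0" by (rule N_nonneg)
  ultimately have "(N (-1) - 1) * (N (-1) + 1) = 0" by (simp add: algebra_simps)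
  moreover have "N (-1) + 1 > 0" using N_nonneg[of "-1"] by linarith
  ultimately have "N (-1) = 1" by simp
  thus ?thesis using N_mult[of "-1" x] by simp
qed

lemma N_inverse: "N (inverse x) = inverse (N x)"
proof (cases "x = 0")
  case False
  hence h: "N (inverse x) * N x = 1" using N_mult[of "inverse x" x] by simp
  have "N x \<noteq> 0" using False by simp
  thus ?thesis using inverse_unique[of "N x" "N (inverse x)"] h by (simp add: mult.commute)
qed simp

lemma N_divide: "N (x / y) = N x / N y"
  by (simp add: divide_inverse N_mult N_inverse)

lemma N_ultra: "N (x+y) \<le> max (N x) (N y)"
proof (cases "x = 0 \<or> y = 0 \<or> x + y = 0")
  case True thus ?thesis using N_nonneg[of x] N_nonneg[of y] by (auto simp: le_max_iff_disj)
next
  case False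
  hence "rat_pval p (x+y) \<ge> min (rat_pval p x) (rat_pval p y)" using val_add by auto
  hence "real p powr (- real_of_int (rat_pval p (x+y))) \<le> max (real p powr (- real_of_int (rat_pval p x))) (real p powr (- real_of_int (rat_pval p y)))"
    using p1 by (auto simp: min_def max_def split: if_splits)
  thus ?thesis using False by (simp add: rat_pnorm_def)
qed

lemma N_tri: "N (x+y) \<le> N x + N y" using N_ultra[of x y] N_nonneg[of x] N_nonneg[of y] by linarith

lemma N_strict: assumes "N y < N x" shows "N (x+y) = N x"
proof -
  have "N (x+y) \<le> N x" using N_ultra[of x y] assms by simp
  moreover have "N x \<le> max (N (x+y)) (N (-y))" using N_ultra[of "x+y" "-y"] by simp
  ultimately show ?thesis using assms by auto
qed

lemma N_diff_abs: "\<bar>N x - N y\<bar> \<le> N (x - y)"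
  using N_tri[of "x-y" y] N_tri[of "y-x" x] N_minus[of "x-y"] by (simp add: abs_le_iff)

end



lemma null_cmp:
  fixes f g :: "nat \<Rightarrow> real"
  assumes "g \<longlonglongrightarrow> 0" "eventually (\<lambda>n. 0 \<le> f n \<and> f n \<le> g n) sequentially"
  shows "f \<longlonglongrightarrow> 0"
proof -
  have "eventually (\<lambda>n. 0 \<le> f n) sequentially" using assms(2) by (rule eventually_mono) auto
  moreover have "eventually (\<lambda>n. f n \<le> g n) sequentially" using assms(2) by (rule eventually_mono) auto
  ultimately show ?thesis using tendsto_sandwich[of "\<lambda>_. 0" f sequentially g 0] assms(1) by auto
qed

context fixes p :: nat assumes pp: "prime p" begin

abbreviation NN where "NN \<equiv> rat_pnorm p"

lemmas Nl = N_nonneg[OF pp] N_zero[OF pp] N_eq0[OF pp] N_pos[OF pp] N_mult[OF pp] N_one[OF pp]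
  N_minus[OF pp] N_inverse[OF pp] N_divide[OF pp] N_ultra[OF pp] N_tri[OF pp] N_strict[OF pp] N_diff_abs[OF pp]

lemma N_com: "NN (a - b) = NN (b - a)"
  using Nl(7)[of "a - b"] by simp

lemma cauchyD: "p_cauchy p X \<Longrightarrow> e > 0 \<Longrightarrow> \<exists>K. \<forall>m\<ge>K. \<forall>n\<ge>K. NN (X m - X n) < e"
  unfolding p_cauchy_def by blast

lemma cauchy_bounded: assumes "p_cauchy p X" obtains M where "M > 0" "\<And>n. NN (X n) \<le> M"
proof -
  obtain K where K: "\<forall>m\<ge>K. \<forall>n\<ge>K. NN (X m - X n) < 1" using cauchyD[OF assms, of 1] by auto
  define M where "M = 1 + NN (X K) + (\<Sum>i<K. NN (X i))"
  have s: "(\<Sum>i<K. NN (X i)) \<ge> 0" by (simp add: sum_nonneg Nl(1))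
  have "NN (X n) \<le> M" for n
  proof (cases "n \<ge> K")
    case True
    have "NN (X n) \<le> NN (X n - X K) + NN (X K)" using Nl(11)[of "X n - X K" "X K"] by simp
    moreover have "NN (X n - X K) < 1" using K True by auto
    ultimately show ?thesis unfolding M_def using s by linarith
  next
    case False
    hence "NN (X n) \<le> (\<Sum>i<K. NN (X i))" by (intro member_le_sum) (auto simp: Nl(1))
    moreover have "NN (X K) \<ge> 0" by (rule Nl(1))
    ultimately show ?thesis unfolding M_def by linarith
  qed
  moreover have "M > 0" unfolding M_def using s Nl(1)[of "X K"] by linarith
  ultimately show ?thesis using that by blast
qed

lemma cauchy_const: "p_cauchy p (\<lambda>n. c)"
  unfolding p_cauchy_def by (simp add: rat_pnorm_def)

lemma cauchy_add: assumes "p_cauchy p X" "p_cauchy p Y" shows "p_cauchy p (\<lambda>n. X n + Y n)"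
  unfolding p_cauchy_def
proof (intro allI impI)
  fix e :: real assume e: "e > 0"
  obtain K1 where K1: "\<forall>m\<ge>K1. \<forall>n\<ge>K1. NN (X m - X n) < e/2" using cauchyD[OF assms(1), of "e/2"] e by auto
  obtain K2 where K2: "\<forall>m\<ge>K2. \<forall>n\<ge>K2. NN (Y m - Y n) < e/2" using cauchyD[OF assms(2), of "e/2"] e by auto
  show "\<exists>K. \<forall>m\<ge>K. \<forall>n\<ge>K. NN (X m + Y m - (X n + Y n)) < e"
  proof (intro exI allI impI)
    fix m n assume "m \<ge> max K1 K2" "n \<ge> max K1 K2"
    hence "NN (X m - X n) < e/2" "NN (Y m - Y n) < e/2" using K1 K2 by auto
    moreover have "NN (X m + Y m - (X n + Y n)) = NN ((X m - X n) + (Y m - Y n))" by (simp add: algebra_simps)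
    ultimately show "NN (X m + Y m - (X n + Y n)) < e" using Nl(11)[of "X m - X n" "Y m - Y n"] by simp
  qed
qed

lemma cauchy_neg: assumes "p_cauchy p X" shows "p_cauchy p (\<lambda>n. - X n)"
proof -
  have e: "NN (- a - - b) = NN (a - b)" for a b using N_com[of b a] by simp
  show ?thesis using assms e unfolding p_cauchy_def by simp
qed

lemma cauchy_mult: assumes "p_cauchy p X" "p_cauchy p Y" shows "p_cauchy p (\<lambda>n. X n * Y n)"
  unfolding p_cauchy_def
proof (intro allI impI)
  fix e :: real assume e: "e > 0"
  obtain Mx where Mx: "Mx > 0" "\<And>n. NN (X n) \<le> Mx" using cauchy_bounded[OF assms(1)] by blast
  obtain My where My: "My > 0" "\<And>n. NN (Y n) \<le> My" using cauchy_bounded[OF assms(2)] by blast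
  obtain K1 where K1: "\<forall>m\<ge>K1. \<forall>n\<ge>K1. NN (Y m - Y n) < e/(4*Mx)" using cauchyD[OF assms(2), of "e/(4*Mx)"] e Mx by auto
  obtain K2 where K2: "\<forall>m\<ge>K2. \<forall>n\<ge>K2. NN (X m - X n) < e/(4*My)" using cauchyD[OF assms(1), of "e/(4*My)"] e My by auto
  show "\<exists>K. \<forall>m\<ge>K. \<forall>n\<ge>K. NN (X m * Y m - X n * Y n) < e"
  proof (intro exI allI impI)
    fix m n assume "m \<ge> max K1 K2" "n \<ge> max K1 K2"
    hence h1: "NN (Y m - Y n) < e/(4*Mx)" and h2: "NN (X m - X n) < e/(4*My)" using K1 K2 by auto
    have eq: "X m * Y m - X n * Y n = X m * (Y m - Y n) + (X m - X n) * Y n" by (simp add: algebra_simps)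
    have "NN (X m * Y m - X n * Y n) \<le> NN (X m) * NN (Y m - Y n) + NN (X m - X n) * NN (Y n)"
      unfolding eq using Nl(11) Nl(5) by metis
    also have "NN (X m) * NN (Y m - Y n) \<le> Mx * (e/(4*Mx))"
      by (rule mult_mono) (use Mx h1 Nl(1) in auto)
    also have "NN (X m - X n) * NN (Y n) \<le> (e/(4*My)) * My"
      by (rule mult_mono) (use My h2 Nl(1) e in auto)
    also have "Mx * (e/(4*Mx)) + (e/(4*My)) * My = e/2" using Mx My by simp
    finally show "NN (X m * Y m - X n * Y n) < e" using e by simp
  qed
qed

lemma cauchy_inverse:
  assumes "p_cauchy p X" "d > 0" "eventually (\<lambda>n. d \<le> NN (X n)) sequentially"
  shows "p_cauchy p (\<lambda>n. inverse (X n))"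
  unfolding p_cauchy_def
proof (intro allI impI)
  fix e :: real assume e: "e > 0"
  obtain K0 where K0: "\<And>n. n \<ge> K0 \<Longrightarrow> d \<le> NN (X n)" using assms(3) unfolding eventually_sequentially by blast
  obtain K where K: "\<forall>m\<ge>K. \<forall>n\<ge>K. NN (X m - X n) < e*(d*d)" using cauchyD[OF assms(1), of "e*(d*d)"] e assms(2) by auto
  show "\<exists>K. \<forall>m\<ge>K. \<forall>n\<ge>K. NN (inverse (X m) - inverse (X n)) < e"
  proof (intro exI allI impI)
    fix m n assume mn: "m \<ge> max K K0" "n \<ge> max K K0"
    hence dm: "d \<le> NN (X m)" and dn: "d \<le> NN (X n)" using K0 by auto
    hence nz: "X m \<noteq> 0" "X n \<noteq> 0" using assms(2) Nl(2) by auto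
    have eq: "inverse (X m) - inverse (X n) = (X n - X m) / (X m * X n)" using nz by (simp add: field_simps)
    have "NN (inverse (X m) - inverse (X n)) = NN (X m - X n) / (NN (X m) * NN (X n))"
      unfolding eq Nl(9) Nl(5) N_com[of "X n"] ..
    also have "\<dots> \<le> NN (X m - X n) / (d * d)"
      by (rule divide_left_mono) (use mult_mono[OF dm dn Nl(1)] assms(2) Nl(1) dm dn in \<open>auto intro!: mult_pos_pos\<close>)
    also have "\<dots> < e" using K mn assms(2) by (simp add: pos_divide_less_eq)
    finally show "NN (inverse (X m) - inverse (X n)) < e" .
  qed
qed

end



context fixes p :: nat assumes pp: "prime p" begin

lemmas Nl3 = Nl[OF pp]
lemmas Ncom3 = N_com[OF pp]

abbreviation NP where "NP \<equiv> rat_pnorm p"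
abbreviation EQ where "EQ \<equiv> p_equiv p"
abbreviation CC where "CC \<equiv> p_cauchy p"

lemma E_refl: "CC X \<Longrightarrow> EQ X X"
  unfolding p_equiv_def by (simp add: rat_pnorm_def)

lemma E_sym: "EQ X Y \<Longrightarrow> EQ Y X"
  unfolding p_equiv_def using Ncom3 by simp

lemma E_trans: assumes "EQ X Y" "EQ Y Z" shows "EQ X Z"
proof -
  have "(\<lambda>n. NP (X n - Y n) + NP (Y n - Z n)) \<longlonglongrightarrow> 0"
    using assms unfolding p_equiv_def using tendsto_add_zero by blast
  hence "(\<lambda>n. NP (X n - Z n)) \<longlonglongrightarrow> 0"
  proof (rule null_cmp, intro always_eventually allI conjI)
    fix n
    have "NP ((X n - Y n) + (Y n - Z n)) \<le> NP (X n - Y n) + NP (Y n - Z n)" by (rule Nl3(11))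
    thus "NP (X n - Z n) \<le> NP (X n - Y n) + NP (Y n - Z n)" by simp
  qed (rule Nl3(1))
  thus ?thesis using assms unfolding p_equiv_def by auto
qed

lemma E_ev: assumes "CC X" "CC Y" "eventually (\<lambda>n. X n = Y n) sequentially" shows "EQ X Y"
proof -
  have "eventually (\<lambda>n. NP (X n - Y n) = 0) sequentially" using assms(3) by (rule eventually_mono) (simp add: rat_pnorm_def)
  hence "(\<lambda>n. NP (X n - Y n)) \<longlonglongrightarrow> 0" by (rule tendsto_eventually)
  thus ?thesis using assms unfolding p_equiv_def by auto
qed

lemma E_add: assumes "EQ X X'" "EQ Y Y'" shows "EQ (\<lambda>n. X n + Y n) (\<lambda>n. X' n + Y' n)"
proof -
  have "(\<lambda>n. NP (X n - X' n) + NP (Y n - Y' n)) \<longlonglongrightarrow> 0"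
    using assms unfolding p_equiv_def using tendsto_add_zero by blast
  hence "(\<lambda>n. NP (X n + Y n - (X' n + Y' n))) \<longlonglongrightarrow> 0"
  proof (rule null_cmp, intro always_eventually allI conjI)
    fix n
    have "NP (X n + Y n - (X' n + Y' n)) = NP ((X n - X' n) + (Y n - Y' n))" by (simp add: algebra_simps)
    thus "NP (X n + Y n - (X' n + Y' n)) \<le> NP (X n - X' n) + NP (Y n - Y' n)" using Nl3(11) by simp
  qed (rule Nl3(1))
  thus ?thesis using assms cauchy_add[OF pp] unfolding p_equiv_def by auto
qed

lemma E_neg: assumes "EQ X X'" shows "EQ (\<lambda>n. - X n) (\<lambda>n. - X' n)"
proof -
  have e: "NP (- a - - b) = NP (a - b)" for a b using Ncom3[of b a] by simp
  show ?thesis using assms cauchy_neg[OF pp] e unfolding p_equiv_def by simp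
qed

lemma E_mult: assumes "EQ X X'" "EQ Y Y'" shows "EQ (\<lambda>n. X n * Y n) (\<lambda>n. X' n * Y' n)"
proof -
  have c: "CC X" "CC Y'" using assms unfolding p_equiv_def by auto
  obtain Mx where Mx: "Mx > 0" "\<And>n. NP (X n) \<le> Mx" using cauchy_bounded[OF pp c(1)] by blast
  obtain My where My: "My > 0" "\<And>n. NP (Y' n) \<le> My" using cauchy_bounded[OF pp c(2)] by blast
  have "(\<lambda>n. Mx * NP (Y n - Y' n) + NP (X n - X' n) * My) \<longlonglongrightarrow> 0"
    using assms unfolding p_equiv_def
    by (intro tendsto_add_zero tendsto_mult_right_zero tendsto_mult_left_zero) auto
  hence "(\<lambda>n. NP (X n * Y n - X' n * Y' n)) \<longlonglongrightarrow> 0"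
  proof (rule null_cmp, intro always_eventually allI conjI)
    fix n
    have eq: "X n * Y n - X' n * Y' n = X n * (Y n - Y' n) + (X n - X' n) * Y' n" by (simp add: algebra_simps)
    have "NP (X n * Y n - X' n * Y' n) \<le> NP (X n) * NP (Y n - Y' n) + NP (X n - X' n) * NP (Y' n)"
      unfolding eq using Nl3(11) Nl3(5) by metis
    also have "\<dots> \<le> Mx * NP (Y n - Y' n) + NP (X n - X' n) * My"
      by (intro add_mono mult_mono) (use Mx My Nl3(1) in auto)
    finally show "NP (X n * Y n - X' n * Y' n) \<le> Mx * NP (Y n - Y' n) + NP (X n - X' n) * My" .
  qed (rule Nl3(1))
  thus ?thesis using assms cauchy_mult[OF pp] unfolding p_equiv_def by auto
qed

lemma E_lower: assumes "EQ X X'" "d > 0" "eventually (\<lambda>n. d \<le> NP (X n)) sequentially"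
  shows "eventually (\<lambda>n. d/2 \<le> NP (X' n)) sequentially"
proof -
  have lim: "(\<lambda>n. NP (X n - X' n)) \<longlonglongrightarrow> 0" using assms unfolding p_equiv_def by auto
  have "eventually (\<lambda>n. dist (NP (X n - X' n)) 0 < d/2) sequentially" using tendstoD[OF lim, of "d/2"] assms(2) by simp
  thus ?thesis using assms(3)
  proof eventually_elim
    case (elim n)
    thus ?case using Nl3(13)[of "X n" "X' n"] Nl3(1)[of "X n - X' n"] by (auto simp: dist_real_def)
  qed
qed

lemma E_inverse: assumes "EQ X X'" "d > 0" "eventually (\<lambda>n. d \<le> NP (X n)) sequentially"
  shows "EQ (\<lambda>n. inverse (X n)) (\<lambda>n. inverse (X' n))"
proof -
  have l2: "eventually (\<lambda>n. d/2 \<le> NP (X' n)) sequentially" by (rule E_lower[OF assms])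
  have c: "CC X" "CC X'" using assms unfolding p_equiv_def by auto
  have "(\<lambda>n. NP (X n - X' n) * (2/(d*d))) \<longlonglongrightarrow> 0"
    using assms unfolding p_equiv_def by (intro tendsto_mult_left_zero) auto
  hence "(\<lambda>n. NP (inverse (X n) - inverse (X' n))) \<longlonglongrightarrow> 0"
  proof (rule null_cmp)
    show "eventually (\<lambda>n. 0 \<le> NP (inverse (X n) - inverse (X' n)) \<and> NP (inverse (X n) - inverse (X' n)) \<le> NP (X n - X' n) * (2/(d*d))) sequentially"
      using assms(3) l2
    proof eventually_elim
      case (elim n)
      hence pos: "NP (X n) > 0" "NP (X' n) > 0" using assms(2) by auto
      hence nz: "X n \<noteq> 0" "X' n \<noteq> 0" using Nl3(2) by auto
      have eq: "inverse (X n) - inverse (X' n) = (X' n - X n) / (X n * X' n)" using nz by (simp add: field_simps)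
      have "NP (inverse (X n) - inverse (X' n)) = NP (X n - X' n) / (NP (X n) * NP (X' n))"
        unfolding eq Nl3(9) Nl3(5) Ncom3[of "X' n"] ..
      also have "\<dots> \<le> NP (X n - X' n) / (d * (d/2))"
        by (rule divide_left_mono) (use mult_mono[OF elim(1) elim(2) Nl3(1)] assms(2) Nl3(1) pos in \<open>auto intro!: mult_pos_pos\<close>)
      also have "\<dots> = NP (X n - X' n) * (2/(d*d))" by simp
      finally show ?case using Nl3(1) by auto
    qed
  qed
  thus ?thesis using c cauchy_inverse[OF pp c(1) assms(2,3)] cauchy_inverse[OF pp c(2) _ l2] assms(2)
    unfolding p_equiv_def by auto
qed

end



context fixes p :: nat assumes pp: "prime p" begin

abbreviation NQ where "NQ \<equiv> rat_pnorm p"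
abbreviation cl where "cl \<equiv> qp_of_seq p"

lemmas Nl4 = Nl3[OF pp]
lemmas Ncom4 = N_com[OF pp]
lemmas El = E_refl[OF pp] E_sym[OF pp] E_trans[OF pp] E_ev[OF pp] E_add[OF pp] E_neg[OF pp] E_mult[OF pp] E_lower[OF pp] E_inverse[OF pp]
lemmas Cl = cauchy_const[OF pp] cauchy_add[OF pp] cauchy_neg[OF pp] cauchy_mult[OF pp] cauchy_inverse[OF pp]

lemma cls_in: "p_cauchy p X \<Longrightarrow> cl X \<in> Qp p"
  unfolding Qp_def by blast

lemma rep_equiv: assumes "p_cauchy p X" shows "p_equiv p X (qp_rep (cl X))"
proof -
  have "X \<in> cl X" using El(1)[OF assms] unfolding qp_of_seq_def by simp
  hence "qp_rep (cl X) \<in> cl X" unfolding qp_rep_def by (rule someI[where P="\<lambda>Y. Y \<in> cl X"])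
  thus ?thesis unfolding qp_of_seq_def by simp
qed

lemma cls_eq: assumes "p_cauchy p Y" shows "cl X = cl Y \<longleftrightarrow> p_equiv p X Y"
proof
  assume "cl X = cl Y"
  moreover have "Y \<in> cl Y" using El(1)[OF assms] unfolding qp_of_seq_def by simp
  ultimately show "p_equiv p X Y" unfolding qp_of_seq_def by (metis mem_Collect_eq)
next
  assume "p_equiv p X Y"
  thus "cl X = cl Y" unfolding qp_of_seq_def using El(2,3) by blast
qed

lemma Qp_rep: assumes "x \<in> Qp p" shows "p_cauchy p (qp_rep x)" "x = cl (qp_rep x)"
proof -
  obtain X where X: "x = cl X" "p_cauchy p X" using assms unfolding Qp_def by blast
  have e: "p_equiv p X (qp_rep x)" using rep_equiv[OF X(2)] X(1) by simp
  thus "p_cauchy p (qp_rep x)" unfolding p_equiv_def by simp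
  thus "x = cl (qp_rep x)" using X(1) cls_eq e by simp
qed

lemma cauchy_of_equiv: "p_equiv p X Y \<Longrightarrow> p_cauchy p Y" unfolding p_equiv_def by simp

lemma O_add: assumes "p_cauchy p X" "p_cauchy p Y" shows "qp_add p (cl X) (cl Y) = cl (\<lambda>n. X n + Y n)"
proof -
  have "p_equiv p (\<lambda>n. qp_rep (cl X) n + qp_rep (cl Y) n) (\<lambda>n. X n + Y n)"
    by (rule El(5)[OF El(2)[OF rep_equiv[OF assms(1)]] El(2)[OF rep_equiv[OF assms(2)]]])
  thus ?thesis unfolding qp_add_def using cls_eq[OF Cl(2)[OF assms]] by simp
qed

lemma O_neg: assumes "p_cauchy p X" shows "qp_neg p (cl X) = cl (\<lambda>n. - X n)"
proof -
  have "p_equiv p (\<lambda>n. - qp_rep (cl X) n) (\<lambda>n. - X n)"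
    by (rule El(6)[OF El(2)[OF rep_equiv[OF assms(1)]]])
  thus ?thesis unfolding qp_neg_def using cls_eq[OF Cl(3)[OF assms]] by simp
qed

lemma O_mult: assumes "p_cauchy p X" "p_cauchy p Y" shows "qp_mult p (cl X) (cl Y) = cl (\<lambda>n. X n * Y n)"
proof -
  have "p_equiv p (\<lambda>n. qp_rep (cl X) n * qp_rep (cl Y) n) (\<lambda>n. X n * Y n)"
    by (rule El(7)[OF El(2)[OF rep_equiv[OF assms(1)]] El(2)[OF rep_equiv[OF assms(2)]]])
  thus ?thesis unfolding qp_mult_def using cls_eq[OF Cl(4)[OF assms]] by simp
qed

lemma O_sub: assumes "p_cauchy p X" "p_cauchy p Y" shows "qp_sub p (cl X) (cl Y) = cl (\<lambda>n. X n - Y n)"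
  unfolding qp_sub_def O_neg[OF assms(2)] O_add[OF assms(1) Cl(3)[OF assms(2)]] by simp

lemma O_inv: assumes "p_cauchy p X" "d > 0" "eventually (\<lambda>n. d \<le> NQ (X n)) sequentially"
  shows "qp_inverse p (cl X) = cl (\<lambda>n. inverse (X n))"
proof -
  have ne: "cl X \<noteq> qp_zero p"
  proof
    assume "cl X = qp_zero p"
    hence "cl (\<lambda>n. 0) = cl X" unfolding qp_zero_def by (rule sym)
    hence "p_equiv p (\<lambda>n. 0) X" by (rule iffD1[OF cls_eq[OF assms(1)]])
    hence "(\<lambda>n. NQ (0 - X n)) \<longlonglongrightarrow> 0" unfolding p_equiv_def by simp
    hence "eventually (\<lambda>n. dist (NQ (0 - X n)) 0 < d) sequentially" using tendstoD assms(2) by blast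
    hence "eventually (\<lambda>n. NQ (X n) < d) sequentially" by (rule eventually_mono) (simp add: Nl4(1) Nl4(7))
    hence "eventually (\<lambda>n. False) sequentially" using assms(3) by (rule eventually_elim2) simp
    thus False by simp
  qed
  have e: "p_equiv p X (qp_rep (cl X))" by (rule rep_equiv[OF assms(1)])
  have "p_cauchy p (\<lambda>n. inverse (X n))" by (rule Cl(5)[OF assms])
  moreover have "p_equiv p (\<lambda>n. inverse (qp_rep (cl X) n)) (\<lambda>n. inverse (X n))"
    by (rule El(2), rule El(9)[OF e assms(2,3)])
  ultimately show ?thesis unfolding qp_inverse_def using ne cls_eq[of "\<lambda>n. inverse (X n)"] by simp
qed

lemma O_div: assumes "p_cauchy p X" "p_cauchy p Y" "d > 0" "eventually (\<lambda>n. d \<le> NQ (Y n)) sequentially"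
  shows "qp_div p (cl X) (cl Y) = cl (\<lambda>n. X n / Y n)"
  unfolding qp_div_def O_inv[OF assms(2-4)] O_mult[OF assms(1) Cl(5)[OF assms(2-4)]]
  by (simp add: divide_inverse)

lemma NM_conv: assumes "p_cauchy p X" shows "convergent (\<lambda>n. NQ (X n))"
proof (rule Cauchy_convergent, rule metric_CauchyI)
  fix e :: real assume "e > 0"
  then obtain K where K: "\<forall>m\<ge>K. \<forall>n\<ge>K. NQ (X m - X n) < e" using cauchyD[OF pp assms] by blast
  show "\<exists>M. \<forall>m\<ge>M. \<forall>n\<ge>M. dist (NQ (X m)) (NQ (X n)) < e"
  proof (intro exI allI impI)
    fix m n assume "m \<ge> K" "n \<ge> K"
    hence "NQ (X m - X n) < e" using K by blast
    thus "dist (NQ (X m)) (NQ (X n)) < e" using Nl4(13)[of "X m" "X n"] unfolding dist_real_def by linarith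
  qed
qed

lemma NM_equiv: assumes "p_equiv p X Y" "(\<lambda>n. NQ (X n)) \<longlonglongrightarrow> L" shows "(\<lambda>n. NQ (Y n)) \<longlonglongrightarrow> L"
proof -
  have "(\<lambda>n. NQ (Y n - X n)) \<longlonglongrightarrow> 0" using assms(1) unfolding p_equiv_def using Ncom4 by simp
  hence "(\<lambda>n. \<bar>NQ (Y n) - NQ (X n)\<bar>) \<longlonglongrightarrow> 0"
    by (rule null_cmp) (use Nl4(13) in auto)
  hence "(\<lambda>n. NQ (Y n) - NQ (X n)) \<longlonglongrightarrow> 0" by (simp add: tendsto_rabs_zero_iff)
  hence "(\<lambda>n. NQ (X n) + (NQ (Y n) - NQ (X n))) \<longlonglongrightarrow> L + 0" by (intro tendsto_add assms(2))
  thus ?thesis by simp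
qed

lemma NM: assumes "p_cauchy p X" shows "(\<lambda>n. NQ (X n)) \<longlonglongrightarrow> qp_norm p (cl X)"
proof -
  have e: "p_equiv p X (qp_rep (cl X))" by (rule rep_equiv[OF assms])
  have "(\<lambda>n. NQ (X n)) \<longlonglongrightarrow> lim (\<lambda>n. NQ (X n))" using NM_conv[OF assms] by (simp add: convergent_LIMSEQ_iff)
  hence "(\<lambda>n. NQ (qp_rep (cl X) n)) \<longlonglongrightarrow> lim (\<lambda>n. NQ (X n))" by (rule NM_equiv[OF e])
  hence "qp_norm p (cl X) = lim (\<lambda>n. NQ (X n))" unfolding qp_norm_def by (rule limI)
  thus ?thesis using NM_conv[OF assms] by (simp add: convergent_LIMSEQ_iff)
qed

lemma NM_const: assumes "p_cauchy p X" "(\<lambda>n. NQ (X n)) \<longlonglongrightarrow> L" "L > 0"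
  shows "eventually (\<lambda>n. NQ (X n) = L) sequentially"
proof -
  have L2: "L/2 > 0" using assms(3) by simp
  obtain K1 where K1: "\<forall>m\<ge>K1. \<forall>n\<ge>K1. NQ (X m - X n) < L/2" using cauchyD[OF pp assms(1) L2] by blast
  have "eventually (\<lambda>n. dist (NQ (X n)) L < L/2) sequentially" by (rule tendstoD[OF assms(2) L2])
  then obtain K2 where K2: "\<And>n. n \<ge> K2 \<Longrightarrow> dist (NQ (X n)) L < L/2"
    unfolding eventually_sequentially by blast
  define K where "K = max K1 K2"
  have "dist (NQ (X K)) L < L/2" using K2[of K] unfolding K_def by simp
  hence XK: "NQ (X K) > L/2" unfolding dist_real_def by linarith
  have c: "NQ (X n) = NQ (X K)" if "n \<ge> K" for n
  proof -
    have "NQ (X n - X K) < L/2" using K1 that unfolding K_def by simp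
    hence "NQ (X n - X K) < NQ (X K)" using XK by linarith
    hence "NQ (X K + (X n - X K)) = NQ (X K)" by (rule N_strict[OF pp])
    thus ?thesis by simp
  qed
  have ev: "eventually (\<lambda>n. NQ (X n) = NQ (X K)) sequentially"
    unfolding eventually_sequentially using c by blast
  hence "(\<lambda>n. NQ (X n)) \<longlonglongrightarrow> NQ (X K)" by (rule tendsto_eventually)
  hence "L = NQ (X K)" by (rule LIMSEQ_unique[OF assms(2)])
  show ?thesis unfolding \<open>L = NQ (X K)\<close> by (rule ev)
qed

end



lemma rat_id: fixes b c z :: rat assumes "c \<noteq> 0" "1 - b*z \<noteq> 0"
  shows "(c*z/(1-b*z)) / (b*(c*z/(1-b*z)) + c) = z"
proof -
  have "b*(c*z/(1-b*z)) + c = c / (1 - b*z)" using assms by (simp add: field_simps)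
  thus ?thesis using assms by (simp add: field_simps)
qed

lemma rat_id2: fixes b c x y :: rat assumes "b*x + c \<noteq> 0" "b*y + c \<noteq> 0"
  shows "x/(b*x+c) - y/(b*y+c) = c*(x - y) / ((b*x+c)*(b*y+c))"
  using assms by (simp add: field_simps)

context fixes p :: nat assumes pp: "prime p" begin

abbreviation NR where "NR \<equiv> rat_pnorm p"

lemmas Nl5 = Nl4[OF pp]
lemmas Cl5 = Cl[OF pp]
lemmas El5 = El[OF pp]

lemma cauchy_diff: "p_cauchy p X \<Longrightarrow> p_cauchy p Y \<Longrightarrow> p_cauchy p (\<lambda>n. X n - Y n)"
  using Cl5(2)[of X "\<lambda>n. - Y n"] Cl5(3)[of Y] by simp

lemma NMsub: assumes "p_cauchy p U" "p_cauchy p V"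
  shows "(\<lambda>n. NR (U n - V n)) \<longlonglongrightarrow> qp_norm p (qp_sub p (qp_of_seq p U) (qp_of_seq p V))"
  unfolding O_sub[OF pp assms] by (rule NM[OF pp cauchy_diff[OF assms]])

lemma sphere_ev: assumes "x \<in> Qp p" "qp_norm p x = 1"
  shows "eventually (\<lambda>n. NR (qp_rep x n) = 1) sequentially"
proof -
  have c: "p_cauchy p (qp_rep x)" and e: "x = qp_of_seq p (qp_rep x)" using Qp_rep[OF pp assms(1)] by auto
  have "(\<lambda>n. NR (qp_rep x n)) \<longlonglongrightarrow> 1" using NM[OF pp c] e assms(2) by simp
  thus ?thesis using NM_const[OF pp c] by simp
qed

end



theorem lemma4p1:
  fixes p :: nat and b c a :: qp and l :: nat
  assumes "prime p"
    and "b \<in> Qp p" and "c \<in> Qp p"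
    and "qp_norm p c = 1" and "qp_norm p b < 1"
    and "a \<in> Qp p" and "l > 0"
    and "qp_ball p a (real p powr (- real l)) \<subseteq> qp_unit_sphere p"
  shows "(\<lambda>x. qp_div p x (qp_add p (qp_mult p b x) c)) ` qp_ball p a (real p powr (- real l))
         = qp_ball p (qp_div p a (qp_add p (qp_mult p b a) c)) (real p powr (- real l))"
proof -
  note pp = assms(1)
  let ?N = "rat_pnorm p"
  let ?cl = "qp_of_seq p"
  define r where "r = real p powr (- real l)"
  define f where "f = (\<lambda>x. qp_div p x (qp_add p (qp_mult p b x) c))"
  have p1: "real p > 1" using pp prime_gt_1_nat by simp
  have r1: "r < 1" unfolding r_def using powr_less_mono[of "- real l" 0 "real p"] p1 assms(7) by simp
  have r0: "r \<ge> 0" unfolding r_def by simp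
  define B where "B = qp_rep b"
  define C where "C = qp_rep c"
  define A where "A = qp_rep a"
  have cB: "p_cauchy p B" and eB: "b = ?cl B" using Qp_rep[OF pp assms(2)] unfolding B_def by auto
  have cC: "p_cauchy p C" and eC: "c = ?cl C" using Qp_rep[OF pp assms(3)] unfolding C_def by auto
  have cA: "p_cauchy p A" and eA: "a = ?cl A" using Qp_rep[OF pp assms(6)] unfolding A_def by auto
  have evC: "eventually (\<lambda>n. ?N (C n) = 1) sequentially" using sphere_ev[OF pp assms(3,4)] unfolding C_def .
  have "(\<lambda>n. ?N (B n)) \<longlonglongrightarrow> qp_norm p b" using NM[OF pp cB] eB by simp
  hence evB: "eventually (\<lambda>n. ?N (B n) < 1) sequentially" using assms(5) order_tendstoD(2) by blast
  define F where "F = (\<lambda>X n. X n / (B n * X n + C n))"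
  have nD: "?N (B n * x + C n) = 1" if "?N (B n) < 1" "?N x = 1" "?N (C n) = 1" for n x
  proof -
    have "?N (B n * x) < ?N (C n)" using that Nl5(5)[OF pp] by simp
    hence "?N (C n + B n * x) = ?N (C n)" by (rule N_strict[OF pp])
    thus ?thesis using that by (simp add: add.commute)
  qed
  have fx: "f (?cl X) = ?cl (F X) \<and> p_cauchy p (F X) \<and> eventually (\<lambda>n. ?N (F X n) = 1) sequentially"
    if cX: "p_cauchy p X" and eX: "eventually (\<lambda>n. ?N (X n) = 1) sequentially" for X
  proof -
    define D where "D = (\<lambda>n. B n * X n + C n)"
    have cD: "p_cauchy p D" unfolding D_def by (intro Cl5(2)[OF pp] Cl5(4)[OF pp] cB cX cC)
    have evD: "eventually (\<lambda>n. ?N (D n) = 1) sequentially"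
      using evB eX evC by eventually_elim (simp add: D_def nD)
    have evD': "eventually (\<lambda>n. 1 \<le> ?N (D n)) sequentially" using evD by (rule eventually_mono) simp
    have "f (?cl X) = qp_div p (?cl X) (?cl D)"
      unfolding f_def eB eC O_mult[OF pp cB cX] O_add[OF pp Cl5(4)[OF pp cB cX] cC] D_def ..
    also have "\<dots> = ?cl (F X)" unfolding O_div[OF pp cX cD zero_less_one evD'] unfolding F_def D_def ..
    finally have 1: "f (?cl X) = ?cl (F X)" .
    have "p_cauchy p (\<lambda>n. X n * inverse (D n))" by (intro Cl5(4)[OF pp] cX Cl5(5)[OF pp cD zero_less_one evD'])
    hence 2: "p_cauchy p (F X)" unfolding F_def D_def by (simp add: divide_inverse)
    have 3: "eventually (\<lambda>n. ?N (F X n) = 1) sequentially"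
      using eX evD by eventually_elim (simp add: F_def D_def Nl5(9)[OF pp])
    show ?thesis using 1 2 3 by blast
  qed
  have iso: "eventually (\<lambda>n. ?N (F X n - F Y n) = ?N (X n - Y n)) sequentially"
    if "eventually (\<lambda>n. ?N (X n) = 1) sequentially" "eventually (\<lambda>n. ?N (Y n) = 1) sequentially" for X Y
    using that evB evC
  proof eventually_elim
    case (elim n)
    have d1: "?N (B n * X n + C n) = 1" and d2: "?N (B n * Y n + C n) = 1" using elim nD by auto
    hence "B n * X n + C n \<noteq> 0" "B n * Y n + C n \<noteq> 0" using Nl5(2)[OF pp] by auto
    hence "F X n - F Y n = C n * (X n - Y n) / ((B n * X n + C n) * (B n * Y n + C n))"
      unfolding F_def by (rule rat_id2)
    thus ?case using d1 d2 elim by (simp add: Nl5(5)[OF pp] Nl5(9)[OF pp])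
  qed
  have aball: "a \<in> qp_ball p a r"
  proof -
    have "(\<lambda>n. ?N (A n - A n)) \<longlonglongrightarrow> qp_norm p (qp_sub p a a)" using NMsub[OF pp cA cA] eA by simp
    hence h: "(\<lambda>n. 0 :: real) \<longlonglongrightarrow> qp_norm p (qp_sub p a a)" by (simp add: rat_pnorm_def)
    have "qp_norm p (qp_sub p a a) = 0" by (rule LIMSEQ_unique[OF h tendsto_const])
    thus ?thesis unfolding qp_ball_def using assms(6) r0 by simp
  qed
  hence "a \<in> qp_unit_sphere p" using assms(8) unfolding r_def by auto
  hence evA: "eventually (\<lambda>n. ?N (A n) = 1) sequentially" using sphere_ev[OF pp] unfolding A_def qp_unit_sphere_def by auto
  obtain fa: "f a = ?cl (F A)" and cFA: "p_cauchy p (F A)" and evFA: "eventually (\<lambda>n. ?N (F A n) = 1) sequentially"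
    using fx[OF cA evA] eA by auto
  have "f ` qp_ball p a r = qp_ball p (f a) r"
  proof
    show "f ` qp_ball p a r \<subseteq> qp_ball p (f a) r"
    proof
      fix z assume "z \<in> f ` qp_ball p a r"
      then obtain x where xb: "x \<in> qp_ball p a r" and z: "z = f x" by blast
      have xQ: "x \<in> Qp p" and xn: "qp_norm p (qp_sub p x a) \<le> r" using xb unfolding qp_ball_def by auto
      have "x \<in> qp_unit_sphere p" using xb assms(8) unfolding r_def by auto
      hence evX: "eventually (\<lambda>n. ?N (qp_rep x n) = 1) sequentially" using sphere_ev[OF pp] unfolding qp_unit_sphere_def by auto
      define X where "X = qp_rep x"
      have cX: "p_cauchy p X" and eX: "x = ?cl X" using Qp_rep[OF pp xQ] unfolding X_def by auto
      obtain fxe: "f x = ?cl (F X)" and cFX: "p_cauchy p (F X)"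
        using fx[OF cX evX[folded X_def]] eX by auto
      have l1: "(\<lambda>n. ?N (X n - A n)) \<longlonglongrightarrow> qp_norm p (qp_sub p x a)" using NMsub[OF pp cX cA] eX eA by simp
      have l2: "(\<lambda>n. ?N (F X n - F A n)) \<longlonglongrightarrow> qp_norm p (qp_sub p (f x) (f a))" using NMsub[OF pp cFX cFA] fxe fa by simp
      have "(\<lambda>n. ?N (F X n - F A n)) \<longlonglongrightarrow> qp_norm p (qp_sub p x a)"
        using tendsto_cong[OF iso[OF evX[folded X_def] evA]] l1 by (rule iffD2)
      hence "qp_norm p (qp_sub p (f x) (f a)) = qp_norm p (qp_sub p x a)" by (rule LIMSEQ_unique[OF l2])
      moreover have "f x \<in> Qp p" using fxe cls_in[OF pp cFX] by simp
      ultimately show "z \<in> qp_ball p (f a) r" unfolding qp_ball_def using z xn by simp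
    qed
  next
    show "qp_ball p (f a) r \<subseteq> f ` qp_ball p a r"
    proof
      fix z assume zb: "z \<in> qp_ball p (f a) r"
      have zQ: "z \<in> Qp p" and zn: "qp_norm p (qp_sub p z (f a)) \<le> r" using zb unfolding qp_ball_def by auto
      define Z where "Z = qp_rep z"
      have cZ: "p_cauchy p Z" and eZ: "z = ?cl Z" using Qp_rep[OF pp zQ] unfolding Z_def by auto
      have l1: "(\<lambda>n. ?N (Z n - F A n)) \<longlonglongrightarrow> qp_norm p (qp_sub p z (f a))" using NMsub[OF pp cZ cFA] eZ fa by simp
      have "qp_norm p (qp_sub p z (f a)) < 1" using zn r1 by simp
      hence ev1: "eventually (\<lambda>n. ?N (Z n - F A n) < 1) sequentially" using l1 order_tendstoD(2) by blast
      have evZ: "eventually (\<lambda>n. ?N (Z n) = 1) sequentially"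
        using ev1 evFA
      proof eventually_elim
        case (elim n)
        hence "?N (Z n - F A n) < ?N (F A n)" by simp
        hence "?N (F A n + (Z n - F A n)) = ?N (F A n)" by (rule N_strict[OF pp])
        thus ?case using elim by simp
      qed
      define W where "W = (\<lambda>n. 1 - B n * Z n)"
      have cW: "p_cauchy p W" unfolding W_def by (intro cauchy_diff[OF pp] Cl5(1)[OF pp] Cl5(4)[OF pp] cB cZ)
      have evW: "eventually (\<lambda>n. ?N (W n) = 1) sequentially"
        using evB evZ
      proof eventually_elim
        case (elim n)
        hence "?N (- (B n * Z n)) < ?N 1" by (simp add: Nl5(5)[OF pp] Nl5(6)[OF pp] Nl5(7)[OF pp])
        hence "?N (1 + - (B n * Z n)) = ?N 1" by (rule N_strict[OF pp])
        thus ?case unfolding W_def by (simp add: Nl5(6)[OF pp])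
      qed
      have evW': "eventually (\<lambda>n. 1 \<le> ?N (W n)) sequentially" using evW by (rule eventually_mono) simp
      define X where "X = (\<lambda>n. C n * Z n / W n)"
      have "p_cauchy p (\<lambda>n. C n * Z n * inverse (W n))"
        by (intro Cl5(4)[OF pp] Cl5(4)[OF pp] cC cZ Cl5(5)[OF pp cW zero_less_one evW'])
      hence cX: "p_cauchy p X" unfolding X_def by (simp add: divide_inverse)
      have evX: "eventually (\<lambda>n. ?N (X n) = 1) sequentially"
        using evC evZ evW by eventually_elim (simp add: X_def Nl5(5)[OF pp] Nl5(9)[OF pp])
      obtain fxe: "f (?cl X) = ?cl (F X)" and cFX: "p_cauchy p (F X)"
        using fx[OF cX evX] by auto
      have "eventually (\<lambda>n. F X n = Z n) sequentially"
        using evC evW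
      proof eventually_elim
        case (elim n)
        hence "C n \<noteq> 0" "1 - B n * Z n \<noteq> 0" using Nl5(2)[OF pp] unfolding W_def by auto
        thus ?case unfolding F_def X_def W_def by (rule rat_id)
      qed
      hence "p_equiv p (F X) Z" by (rule El5(4)[OF pp cFX cZ])
      hence "?cl (F X) = ?cl Z" using cls_eq[OF pp cZ] by simp
      hence zf: "z = f (?cl X)" using fxe eZ by simp
      have l2: "(\<lambda>n. ?N (X n - A n)) \<longlonglongrightarrow> qp_norm p (qp_sub p (?cl X) a)" using NMsub[OF pp cX cA] eA by simp
      have l3: "(\<lambda>n. ?N (F X n - F A n)) \<longlonglongrightarrow> qp_norm p (qp_sub p z (f a))"
        using NMsub[OF pp cFX cFA] fxe fa zf by simp
      have "(\<lambda>n. ?N (X n - A n)) \<longlonglongrightarrow> qp_norm p (qp_sub p z (f a))"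
        using tendsto_cong[OF iso[OF evX evA]] l3 by (rule iffD1)
      hence "qp_norm p (qp_sub p (?cl X) a) = qp_norm p (qp_sub p z (f a))" by (rule LIMSEQ_unique[OF l2])
      hence "?cl X \<in> qp_ball p a r" unfolding qp_ball_def using zn cls_in[OF pp cX] by simp
      thus "z \<in> f ` qp_ball p a r" using zf by blast
    qed
  qed
  thus ?thesis unfolding f_def r_def .
qed


end
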